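(* Let $n,m\in\mathbb{N}$ and $f:\mathbb{F}_2^n\to\mathbb{F}_2$. Then $f$ is $m$-bent if and only if $C^{(m)}_f(\mathbf{z})=0$ for all $\mathbf{z}\in\mathbb{F}_2^n\setminus\{0^n\}$ and $C^{(m)}_f(0^n)=2^n$.
   Context: $\zeta_m=e^{2\pi i/m}$; $wt$ is Hamming weight; $\mathbf{x}\cdot\mathbf{y}=\bigoplus_i x_iy_i\in\mathbb{F}_2$; $\mathbf{x}\odot\mathbf{y}=\sum_i x_iy_i$ computed in the integers. The $m$-Hadamard transform is $\mathcal{H}^{(m)}_f(\boldsymbol{\omega})=2^{-n/2}\sum_{\mathbf{x}\in\mathbb{F}_2^n}(-1)^{f(\mathbf{x})\oplus\mathbf{x}\cdot\boldsymbol{\omega}}\zeta_m^{wt(\mathbf{x})}$; $f$ is called $m$-bent if $|\mathcal{H}^{(m)}_f(\boldsymbol{\omega})|=1$ for all $\boldsymbol{\omega}\in\mathbb{F}_2^n$. The $m$-autocorrelation is $C^{(m)}_{f}(\mathbf{y})=\sum_{\mathbf{x}\in\mathbb{F}_2^n}(-1)^{f(\mathbf{x})\oplus f(\mathbf{x}\oplus\mathbf{y})}(\zeta_m^2)^{\mathbf{x}\odot\mathbf{y}}$. *)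

theory Defs
  imports "HOL-Analysis.Analysis"
begin

text \<open>Vectors of F_2^n are modelled as boolean lists of length n (True = 1).\<close>

definition vecs :: "nat \<Rightarrow> bool list set" where
  "vecs n = {xs. length xs = n}"

definition bit :: "bool \<Rightarrow> nat" where
  "bit b = (if b then 1 else 0)"

definition wt :: "bool list \<Rightarrow> nat" where
  "wt xs = length (filter id xs)"

definition dotF2 :: "bool list \<Rightarrow> bool list \<Rightarrow> bool" where
  "dotF2 x y = odd (\<Sum>i<length x. bit (x ! i \<and> y ! i))"

definition dotZ :: "bool list \<Rightarrow> bool list \<Rightarrow> nat" where
  "dotZ x y = (\<Sum>i<length x. bit (x ! i \<and> y ! i))"

definition xorv :: "bool list \<Rightarrow> bool list \<Rightarrow> bool list" where
  "xorv x y = map2 (\<noteq>) x y"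

definition sgn1 :: "bool \<Rightarrow> complex" where
  "sgn1 b = (if b then -1 else 1)"

definition zeta :: "nat \<Rightarrow> complex" where
  "zeta m = exp (2 * of_real pi * \<i> / of_nat m)"

definition mHadamard :: "nat \<Rightarrow> nat \<Rightarrow> (bool list \<Rightarrow> bool) \<Rightarrow> bool list \<Rightarrow> complex" where
  "mHadamard m n f w = (1 / of_real (sqrt (2 ^ n))) *
     (\<Sum>x\<in>vecs n. sgn1 (f x \<noteq> dotF2 x w) * zeta m ^ wt x)"

definition m_bent :: "nat \<Rightarrow> nat \<Rightarrow> (bool list \<Rightarrow> bool) \<Rightarrow> bool" where
  "m_bent m n f = (\<forall>w\<in>vecs n. norm (mHadamard m n f w) = 1)"

definition mAutocorr :: "nat \<Rightarrow> nat \<Rightarrow> (bool list \<Rightarrow> bool) \<Rightarrow> bool list \<Rightarrow> complex" where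
  "mAutocorr m n f y = (\<Sum>x\<in>vecs n. sgn1 (f x \<noteq> f (xorv x y)) * (zeta m ^ 2) ^ dotZ x y)"

end

theory Submission
  imports Defs
begin

lemma vecs_finite: "finite (vecs n)"
  using finite_lists_length_eq[of "UNIV::bool set" n] by (simp add: vecs_def)

lemma vecs_card: "card (vecs n) = 2 ^ n"
  using card_lists_length_eq[of "UNIV::bool set" n] by (simp add: vecs_def)

lemma dotZ_Nil: "dotZ [] y = 0" by (simp add: dotZ_def)
lemma dotZ_Cons: "dotZ (a#x) (b#y) = bit (a \<and> b) + dotZ x y"
  unfolding dotZ_def by (simp only: length_Cons sum.lessThan_Suc_shift) simp
lemma dotF2_eq: "dotF2 x y = odd (dotZ x y)" by (simp add: dotF2_def dotZ_def)
lemma wt_Nil: "wt [] = 0" by (simp add: wt_def)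
lemma wt_Cons: "wt (a#x) = bit a + wt x" by (simp add: wt_def bit_def)
lemma xorv_Cons: "xorv (a#x) (b#y) = (a \<noteq> b) # xorv x y" by (simp add: xorv_def)
lemma xorv_Nil: "xorv [] y = []" by (simp add: xorv_def)

lemma length_xorv: "length (xorv x y) = min (length x) (length y)" by (simp add: xorv_def)

lemma xorv_inv: "length x = length z \<Longrightarrow> xorv x (xorv x z) = z"
  by (induction x z rule: list_induct2) (auto simp: xorv_Cons xorv_Nil)

lemma xorv_zero: "xorv x (replicate (length x) False) = x"
  by (induction x) (auto simp: xorv_Cons xorv_Nil)

lemma dotZ_zero: "dotZ x (replicate (length x) False) = 0"
  by (induction x) (auto simp: dotZ_Cons dotZ_Nil bit_def)

lemma dotF2_xorv: "length x = length y \<Longrightarrow> length y = length w \<Longrightarrow>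
   dotF2 (xorv x y) w = (dotF2 x w \<noteq> dotF2 y w)"
proof (induction x y arbitrary: w rule: list_induct2)
  case Nil then show ?case by (simp add: xorv_Nil dotZ_Nil dotF2_eq)
next
  case (Cons a x b y)
  then obtain c w' where "w = c # w'" by (cases w) auto
  with Cons show ?case by (auto simp: xorv_Cons dotZ_Cons bit_def dotF2_eq)
qed

lemma wt_xorv: "length x = length z \<Longrightarrow> wt (xorv x z) + 2 * dotZ x z = wt x + wt z"
  by (induction x z rule: list_induct2) (auto simp: xorv_Cons xorv_Nil dotZ_Cons dotZ_Nil wt_Cons wt_Nil bit_def)

lemma vecs_Suc: "vecs (Suc n) = (\<lambda>(b,w). b # w) ` (UNIV \<times> vecs n)"
  unfolding vecs_def
  by (auto simp: image_iff length_Suc_conv)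

lemma sum_vecs_Suc: "(\<Sum>w\<in>vecs (Suc n). h w) = (\<Sum>w\<in>vecs n. h (True # w)) + (\<Sum>w\<in>vecs n. h (False # w))"
proof -
  have "(\<Sum>w\<in>vecs (Suc n). h w) = (\<Sum>p\<in>UNIV \<times> vecs n. h (fst p # snd p))"
    unfolding vecs_Suc by (subst sum.reindex) (auto simp: inj_on_def case_prod_beta)
  also have "\<dots> = (\<Sum>b\<in>UNIV. \<Sum>w\<in>vecs n. h (b # w))"
    by (simp add: sum.cartesian_product case_prod_beta)
  also have "\<dots> = (\<Sum>w\<in>vecs n. h (True # w)) + (\<Sum>w\<in>vecs n. h (False # w))"
    by (simp add: UNIV_bool add.commute)
  finally show ?thesis .
qed

lemma sgn1_mult: "sgn1 a * sgn1 b = sgn1 (a \<noteq> b)" by (simp add: sgn1_def)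
lemma cnj_sgn1[simp]: "cnj (sgn1 a) = sgn1 a" by (simp add: sgn1_def)

lemma orth: "z \<in> vecs n \<Longrightarrow> (\<Sum>w\<in>vecs n. sgn1 (dotF2 z w)) = (if z = replicate n False then 2 ^ n else 0)"
proof (induction n arbitrary: z)
  case 0 then show ?case by (simp add: vecs_def dotF2_def sgn1_def)
next
  case (Suc n)
  then obtain a z' where z: "z = a # z'" "z' \<in> vecs n" by (cases z) (auto simp: vecs_def)
  have "(\<Sum>w\<in>vecs (Suc n). sgn1 (dotF2 z w)) = (\<Sum>w\<in>vecs n. sgn1 (a \<noteq> dotF2 z' w)) + (\<Sum>w\<in>vecs n. sgn1 (dotF2 z' w))"
    by (simp add: sum_vecs_Suc z dotF2_eq dotZ_Cons bit_def)
  also have "\<dots> = (if z = replicate (Suc n) False then 2 ^ Suc n else 0)"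
  proof (cases a)
    case True
    have "(\<Sum>w\<in>vecs n. sgn1 (a \<noteq> dotF2 z' w)) = - (\<Sum>w\<in>vecs n. sgn1 (dotF2 z' w))"
      unfolding sum_negf[symmetric] using True by (intro sum.cong) (auto simp: sgn1_def)
    then show ?thesis using True z by simp
  next
    case False
    then show ?thesis using z Suc.IH[OF z(2)] by simp
  qed
  finally show ?case .
qed

lemma zeta_cnj: "cnj (zeta m) * zeta m = 1"
proof -
  have "zeta m = exp (\<i> * of_real (2 * pi / real m))" unfolding zeta_def by (simp add: field_simps)
  then have "norm (zeta m) = 1" by simp
  then show ?thesis using complex_norm_square[of "zeta m"] by (simp add: mult.commute)
qed

lemma xorv_eq_zero: "length y = length z \<Longrightarrow> (xorv y z = replicate (length y) False) = (y = z)"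
  by (induction y z rule: list_induct2) (auto simp: xorv_Cons xorv_Nil)

lemma dotF2_zero: "dotF2 (replicate n False) w = False"
  by (simp add: dotF2_def bit_def)

lemma wt_zero: "wt (replicate n False) = 0"
  by (simp add: wt_def)

lemma zeta_nz: "zeta m \<noteq> 0" by (simp add: zeta_def)

theorem theorem6:
  fixes n m :: nat and f :: "bool list \<Rightarrow> bool"
  assumes "m \<ge> 1"
  shows "m_bent m n f \<longleftrightarrow>
    ((\<forall>z\<in>vecs n. z \<noteq> replicate n False \<longrightarrow> mAutocorr m n f z = 0) \<and>
     mAutocorr m n f (replicate n False) = 2 ^ n)"
proof -
  define u where "u = zeta m"
  define g where "g x = sgn1 (f x) * u ^ wt x" for x
  define s where "s z w = sgn1 (dotF2 z w)" for z w
  define S where "S w = (\<Sum>x\<in>vecs n. g x * s x w)" for w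
  define A where "A z = (\<Sum>x\<in>vecs n. g x * cnj (g (xorv x z)))" for z
  define Z0 where "Z0 = replicate n False"
  have fin: "finite (vecs n)" by (rule vecs_finite)
  have uu: "u * cnj u = 1" using zeta_cnj[of m] by (simp add: u_def mult.commute)
  have Oin: "Z0 \<in> vecs n" by (simp add: Z0_def vecs_def)
  have H: "mHadamard m n f w = S w / of_real (sqrt (2 ^ n))" for w
    unfolding mHadamard_def S_def g_def s_def u_def
    by (simp add: mult_ac) (rule sum.cong[OF refl], simp add: sgn1_def)
  have AC: "mAutocorr m n f z = u ^ wt z * A z" if z: "z \<in> vecs n" for z
    unfolding mAutocorr_def A_def sum_distrib_left
  proof (rule sum.cong[OF refl])
    fix x assume x: "x \<in> vecs n"
    define a where "a = wt (xorv x z)"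
    define d where "d = dotZ x z"
    have wsum: "wt z + wt x = a + 2 * d"
      using wt_xorv[of x z] x z by (simp add: a_def d_def vecs_def)
    have "u ^ wt z * u ^ wt x * cnj u ^ a = u ^ (a + 2 * d) * cnj u ^ a"
      by (simp add: power_add[symmetric] wsum)
    also have "\<dots> = (u * cnj u) ^ a * (u ^ 2) ^ d"
      unfolding power_add power_mult power_mult_distrib by (simp add: mult_ac)
    also have "\<dots> = (u ^ 2) ^ d" using uu by simp
    finally have key: "u ^ wt z * u ^ wt x * cnj u ^ a = (u ^ 2) ^ d" .
    have "u ^ wt z * (g x * cnj (g (xorv x z))) =
          sgn1 (f x \<noteq> f (xorv x z)) * (u ^ wt z * u ^ wt x * cnj u ^ a)"
      by (simp add: g_def a_def sgn1_def mult_ac)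
    then have "u ^ wt z * (g x * cnj (g (xorv x z))) = sgn1 (f x \<noteq> f (xorv x z)) * (u ^ 2) ^ d"
      by (simp only: key)
    then show "sgn1 (f x \<noteq> f (xorv x z)) * (zeta m ^ 2) ^ dotZ x z = u ^ wt z * (g x * cnj (g (xorv x z)))"
      by (simp add: d_def u_def)
  qed
  have C0: "mAutocorr m n f Z0 = 2 ^ n"
  proof -
    have "mAutocorr m n f Z0 = (\<Sum>x\<in>vecs n. 1)"
      unfolding mAutocorr_def
      by (rule sum.cong[OF refl]) (auto simp: Z0_def vecs_def xorv_zero dotZ_zero sgn1_def)
    then show ?thesis by (simp add: vecs_card)
  qed
  have A0: "A Z0 = 2 ^ n" using AC[OF Oin] C0 by (simp add: Z0_def wt_zero)
  have SS: "S w * cnj (S w) = (\<Sum>z\<in>vecs n. A z * s z w)" if w: "w \<in> vecs n" for w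
  proof -
    have "S w * cnj (S w) = (\<Sum>x\<in>vecs n. \<Sum>y\<in>vecs n. g x * cnj (g y) * (s x w * s y w))"
      unfolding S_def cnj_sum sum_product by (simp add: s_def mult_ac)
    also have "\<dots> = (\<Sum>x\<in>vecs n. \<Sum>z\<in>vecs n. g x * cnj (g (xorv x z)) * s z w)"
    proof (rule sum.cong[OF refl])
      fix x assume x: "x \<in> vecs n"
      show "(\<Sum>y\<in>vecs n. g x * cnj (g y) * (s x w * s y w)) = (\<Sum>z\<in>vecs n. g x * cnj (g (xorv x z)) * s z w)"
      proof (rule sym, rule sum.reindex_bij_witness[where i="xorv x" and j="xorv x"])
        fix z assume z: "z \<in> vecs n"
        show "xorv x (xorv x z) = z" using x z by (simp add: vecs_def xorv_inv)
        show "xorv x z \<in> vecs n" using x z by (simp add: vecs_def length_xorv)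
        show "g x * cnj (g (xorv x z)) * (s x w * s (xorv x z) w) = g x * cnj (g (xorv x z)) * s z w"
          using x z w by (simp add: s_def vecs_def dotF2_xorv sgn1_def)
      qed (use x in \<open>auto simp: vecs_def xorv_inv length_xorv\<close>)
    qed
    also have "\<dots> = (\<Sum>z\<in>vecs n. A z * s z w)"
      unfolding A_def sum_distrib_right by (rule sum.swap)
    finally show ?thesis .
  qed
  have bentS: "m_bent m n f \<longleftrightarrow> (\<forall>w\<in>vecs n. S w * cnj (S w) = 2 ^ n)"
  proof -
    have "norm (mHadamard m n f w) = 1 \<longleftrightarrow> S w * cnj (S w) = 2 ^ n" for w
    proof -
      have "norm (mHadamard m n f w) = norm (S w) / sqrt (2 ^ n)"
        by (simp add: H norm_divide)
      then have "norm (mHadamard m n f w) = 1 \<longleftrightarrow> norm (S w) = sqrt (2 ^ n)" by auto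
      also have "\<dots> \<longleftrightarrow> norm (S w) ^ 2 = 2 ^ n"
        by (metis norm_ge_zero real_sqrt_pow2 real_sqrt_unique zero_le_numeral zero_le_power)
      also have "\<dots> \<longleftrightarrow> complex_of_real (norm (S w) ^ 2) = 2 ^ n"
        by (metis of_real_eq_iff of_real_numeral of_real_power)
      also have "\<dots> \<longleftrightarrow> S w * cnj (S w) = 2 ^ n" by (simp only: complex_norm_square)
      finally show ?thesis .
    qed
    then show ?thesis unfolding m_bent_def by simp
  qed
  show ?thesis
  proof
    assume b: "m_bent m n f"
    have Ay: "A y = (if y = Z0 then 2 ^ n else 0)" if y: "y \<in> vecs n" for y
    proof -
      have "(\<Sum>w\<in>vecs n. s y w * (S w * cnj (S w))) = (\<Sum>w\<in>vecs n. s y w * 2 ^ n)"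
        using b bentS by simp
      also have "\<dots> = 2 ^ n * (if y = Z0 then 2 ^ n else 0)"
        using orth[OF y] by (simp add: sum_distrib_right[symmetric] s_def Z0_def mult.commute)
      finally have L: "(\<Sum>w\<in>vecs n. s y w * (S w * cnj (S w))) = 2 ^ n * (if y = Z0 then 2 ^ n else 0)" .
      have "(\<Sum>w\<in>vecs n. s y w * (S w * cnj (S w))) = (\<Sum>w\<in>vecs n. \<Sum>z\<in>vecs n. A z * (s y w * s z w))"
        using SS by (simp add: sum_distrib_left mult_ac)
      also have "\<dots> = (\<Sum>z\<in>vecs n. A z * (\<Sum>w\<in>vecs n. s y w * s z w))"
        by (subst sum.swap) (simp add: sum_distrib_left)
      also have "\<dots> = (\<Sum>z\<in>vecs n. A z * (if z = y then 2 ^ n else 0))"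
      proof (rule sum.cong[OF refl])
        fix z assume z: "z \<in> vecs n"
        have "(\<Sum>w\<in>vecs n. s y w * s z w) = (\<Sum>w\<in>vecs n. sgn1 (dotF2 (xorv y z) w))"
          by (rule sum.cong[OF refl]) (use y z in \<open>simp add: s_def vecs_def dotF2_xorv sgn1_def\<close>)
        also have "\<dots> = (if z = y then 2 ^ n else 0)"
          using orth[of "xorv y z" n] y z xorv_eq_zero[of y z]
          by (auto simp: vecs_def length_xorv)
        finally show "A z * (\<Sum>w\<in>vecs n. s y w * s z w) = A z * (if z = y then 2 ^ n else 0)" by simp
      qed
      also have "\<dots> = A y * 2 ^ n"
        using y fin by (simp add: if_distrib[where f="\<lambda>t. A _ * t"] cong: if_cong)
      finally show ?thesis using L by (simp add: mult.commute)
    qed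
    have "\<forall>z\<in>vecs n. z \<noteq> Z0 \<longrightarrow> mAutocorr m n f z = 0"
      using AC Ay by simp
    then show "(\<forall>z\<in>vecs n. z \<noteq> replicate n False \<longrightarrow> mAutocorr m n f z = 0) \<and>
       mAutocorr m n f (replicate n False) = 2 ^ n"
      using C0 by (simp add: Z0_def)
  next
    assume r: "(\<forall>z\<in>vecs n. z \<noteq> replicate n False \<longrightarrow> mAutocorr m n f z = 0) \<and>
       mAutocorr m n f (replicate n False) = 2 ^ n"
    have Az: "A z = (if z = Z0 then 2 ^ n else 0)" if z: "z \<in> vecs n" for z
    proof (cases "z = Z0")
      case True then show ?thesis using A0 by simp
    next
      case False
      then have "u ^ wt z * A z = 0" using AC[OF z] r z by (simp add: Z0_def)
      then show ?thesis using False zeta_nz by (simp add: u_def)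
    qed
    have "S w * cnj (S w) = 2 ^ n" if w: "w \<in> vecs n" for w
    proof -
      have "S w * cnj (S w) = (\<Sum>z\<in>vecs n. if z = Z0 then 2 ^ n * s Z0 w else 0)"
        using SS[OF w] Az by (auto intro!: sum.cong)
      also have "\<dots> = 2 ^ n * s Z0 w" using fin Oin by simp
      also have "\<dots> = 2 ^ n" by (simp add: s_def Z0_def dotF2_zero sgn1_def)
      finally show ?thesis .
    qed
    then show "m_bent m n f" using bentS by simp
  qed
qed

end
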